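(* Let $n,m \in \mathbb{N}$, $a \in \Delta_n^+$, $b \in \Delta_m^+$, and let $g \colon \mathbb{R}^{n\times m} \to \mathbb{R}$ be the quadratic function \[ g(\pi) = \tfrac12 \langle \pi, H\pi\rangle + \langle C, \pi\rangle \quad \forall \pi \in \mathbb{R}^{n\times m}, \] where $H \in \mathbb{R}^{n\times n}$ is symmetric and $C \in \mathbb{R}^{n\times m}$. Assume $\lambda > \|H\|_\infty$. Let $T_\lambda \colon \mathbb{R}^{n\times m} \to \Pi_{a,b}^+$ be defined by $T_\lambda(A) = \operatorname{argmin}_{\pi \in \Pi_{a,b}} \big(\langle \nabla g(A), \pi\rangle + \lambda h(\pi)\big)$. Then $T_\lambda$ is a contraction with respect to the distance induced by $\|\cdot\|_1$ and has a unique fixed point $\pi^\star \in \Pi_{a,b}^+$. Moreover, for any $\pi^{(0)} \in \Pi_{a,b}$, the sequence defined by $\pi^{(k+1)} = T_\lambda(\pi^{(k)})$ for $k \ge 0$ satisfies, for every $T \in \mathbb{N}$, \[ \|\pi^{(T)} - \pi^\star\|_1 \le \frac{(\|H\|_\infty/\lambda)^T}{1 - \|H\|_\infty/\lambda}\, \|\pi^{(1)} - \pi^{(0)}\|_1 . \]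
   Context: $\Delta_n^+ := \{a \in \mathbb{R}^n : a_i > 0\ \forall i,\ \sum_i a_i = 1\}$. $\Pi_{a,b} := \{\pi \in \mathbb{R}_+^{n\times m} : \pi 1_m = a,\ \pi^\top 1_n = b\}$ and $\Pi_{a,b}^+$ is its subset with all entries strictly positive. $h(\pi) := \sum_{i,j}\pi_{ij}\log\frac{\pi_{ij}}{e}$ (with $0\log0=0$); for each $A$ the minimizer defining $T_\lambda(A)$ exists, is unique, and lies in $\Pi_{a,b}^+$. $\langle A,B\rangle = \mathrm{tr}(A^\top B)$; $\|A\|_1 := \sum_{i,j}|A_{ij}|$ and $\|A\|_\infty := \max_{i,j}|A_{ij}|$ (so $\|H\|_\infty$ is the largest absolute entry of $H$). *)

theory Defs
  imports "HOL-Analysis.Analysis"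
begin

text \<open>Matrices in R^{n x m} are modelled as real^'m^'n (rows indexed by 'n).
  The library inner product on real^'m^'n is the Frobenius inner product tr(A^T B).\<close>

definition pos_simplex :: "(real^'n) set" where
  "pos_simplex = {a. (\<forall>i. a $ i > 0) \<and> (\<Sum>i\<in>UNIV. a $ i) = 1}"

definition transport_polytope :: "real^'n \<Rightarrow> real^'m \<Rightarrow> (real^'m^'n) set" where
  "transport_polytope a b = {\<pi>. (\<forall>i j. \<pi> $ i $ j \<ge> 0)
      \<and> (\<forall>i. (\<Sum>j\<in>UNIV. \<pi> $ i $ j) = a $ i)
      \<and> (\<forall>j. (\<Sum>i\<in>UNIV. \<pi> $ i $ j) = b $ j)}"

definition transport_polytope_pos :: "real^'n \<Rightarrow> real^'m \<Rightarrow> (real^'m^'n) set" where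
  "transport_polytope_pos a b = {\<pi> \<in> transport_polytope a b. \<forall>i j. \<pi> $ i $ j > 0}"

definition entropy :: "real^'m^'n \<Rightarrow> real" where
  "entropy \<pi> = (\<Sum>i\<in>UNIV. \<Sum>j\<in>UNIV.
      (if \<pi> $ i $ j = 0 then 0 else \<pi> $ i $ j * ln (\<pi> $ i $ j / exp 1)))"

definition norm1 :: "real^'m^'n \<Rightarrow> real" where
  "norm1 A = (\<Sum>i\<in>UNIV. \<Sum>j\<in>UNIV. \<bar>A $ i $ j\<bar>)"

definition norminf :: "real^'m^'n \<Rightarrow> real" where
  "norminf A = Max {\<bar>A $ i $ j\<bar> | i j. True}"

definition grad :: "(real^'m^'n \<Rightarrow> real) \<Rightarrow> real^'m^'n \<Rightarrow> real^'m^'n" where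
  "grad f A = (THE G. (f has_derivative (\<lambda>x. inner G x)) (at A))"

definition quad_obj :: "real^'n^'n \<Rightarrow> real^'m^'n \<Rightarrow> real^'m^'n \<Rightarrow> real" where
  "quad_obj H C \<pi> = inner \<pi> (H ** \<pi>) / 2 + inner C \<pi>"

definition T_map :: "(real^'m^'n \<Rightarrow> real) \<Rightarrow> real \<Rightarrow> real^'n \<Rightarrow> real^'m
                     \<Rightarrow> real^'m^'n \<Rightarrow> real^'m^'n" where
  "T_map g lam a b A = (THE \<pi>. \<pi> \<in> transport_polytope a b \<and>
      (\<forall>\<sigma>\<in>transport_polytope a b.
          inner (grad g A) \<pi> + lam * entropy \<pi> \<le> inner (grad g A) \<sigma> + lam * entropy \<sigma>))"

end

theory Submission
  imports Defs "HOL-Real_Asymp.Real_Asymp"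
begin


definition ent :: "real \<Rightarrow> real" where "ent x = x * ln (x / exp 1)"

lemma entropy_eq: "entropy \<pi> = (\<Sum>i\<in>UNIV. \<Sum>j\<in>UNIV. ent (\<pi> $ i $ j))"
  unfolding entropy_def ent_def by (intro sum.cong refl) auto

lemma ent_pos: "x > 0 \<Longrightarrow> ent x = x * ln x - x"
  unfolding ent_def by (simp add: ln_div algebra_simps)

lemma grad_ineq:
  assumes "x \<ge> 0" "z > 0"
  shows "ent z + ln z * (x - z) \<le> ent x"
proof (cases "x = 0")
  case True
  have "ent z + ln z * (x - z) = - z" using True assms by (simp add: ent_pos algebra_simps)
  moreover have "ent x = 0" using True by (simp add: ent_def)
  ultimately show ?thesis using assms by simp
next
  case False
  then have x: "x > 0" using assms by simp
  have "ln (z / x) \<le> z / x - 1" using ln_le_minus_one[of "z/x"] x assms by simp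
  then have "x * ln (z / x) \<le> z - x" using x by (simp add: field_simps)
  then have "x * (ln z - ln x) \<le> z - x" using x assms by (simp add: ln_div)
  then show ?thesis using x assms by (simp add: ent_pos algebra_simps)
qed

lemma logmean_aux:
  fixes t :: real assumes "t \<ge> 1" shows "2 * (t - 1) / (t + 1) \<le> ln t"
proof -
  let ?u = "\<lambda>t::real. ln t - 2 * (t - 1) / (t + 1)"
  have "?u 1 \<le> ?u t"
  proof (rule DERIV_nonneg_imp_nondecreasing[OF assms])
    fix x :: real assume x: "1 \<le> x" "x \<le> t"
    have "(?u has_real_derivative (1/x - 4 / (x+1)^2)) (at x)"
      using x apply (auto intro!: derivative_eq_intros)
      apply (simp add: divide_simps power2_eq_square)
      done
    moreover have "1/x - 4 / (x+1)^2 \<ge> 0"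
    proof -
      have "1/x - 4/(x+1)^2 = (x - 1)^2 / (x * (x+1)^2)" using x by (simp add: divide_simps) (simp add: algebra_simps power2_eq_square)
      also have "\<dots> \<ge> 0" using x by simp
      finally show ?thesis .
    qed
    ultimately show "\<exists>y. (?u has_real_derivative y) (at x) \<and> 0 \<le> y" by blast
  qed
  then show ?thesis by simp
qed

lemma logmean:
  fixes x y :: real assumes "0 < y" "y < x" shows "2 * (x - y) / (x + y) \<le> ln x - ln y"
proof -
  have "2 * (x/y - 1) / (x/y + 1) \<le> ln (x/y)" using assms by (intro logmean_aux) (simp add: le_divide_eq)
  moreover have "x/y - 1 = (x-y)/y" "x/y+1 = (x+y)/y" using assms by (simp_all add: field_simps)
  moreover have "2 * ((x-y)/y) / ((x+y)/y) = 2 * (x - y) / (x + y)" using assms by simp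
  ultimately show ?thesis using assms by (simp add: ln_div)
qed

lemma pointwise_sq:
  fixes x y :: real assumes "0 < x" "0 < y"
  shows "(x - y)^2 \<le> ((ln x - ln y) * (x - y)) * ((x + y) / 2)"
proof (cases "x = y")
  case True then show ?thesis by (simp add: power2_eq_square)
next
  case False
  show ?thesis
  proof (cases "y < x")
    case True
    have "2 * (x - y) / (x + y) \<le> ln x - ln y" using logmean assms True by blast
    then have "2 * (x - y) \<le> (ln x - ln y) * (x + y)" using assms by (simp add: field_simps)
    then have "(x-y) * (2 * (x - y)) \<le> (x - y) * ((ln x - ln y) * (x + y))" using True
      by (intro mult_left_mono) auto
    then have "(x-y) * (2 * (x - y)) / 2 \<le> (x - y) * ((ln x - ln y) * (x + y)) / 2" by simp
    moreover have "(x-y) * (2 * (x - y)) / 2 = (x-y)^2" by (simp add: power2_eq_square)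
    moreover have "(x - y) * ((ln x - ln y) * (x + y)) / 2 = ((ln x - ln y) * (x - y)) * ((x + y) / 2)" by simp
    ultimately show ?thesis by simp
  next
    case F: False
    then have yx: "x < y" using False by simp
    have "2 * (y - x) / (y + x) \<le> ln y - ln x" using logmean assms yx by blast
    then have "2 * (y - x) \<le> (ln y - ln x) * (y + x)" using assms by (simp add: field_simps)
    then have "(y-x) * (2 * (y - x)) \<le> (y - x) * ((ln y - ln x) * (y + x))" using yx
      by (intro mult_left_mono) auto
    then have "(y-x) * (2 * (y - x)) / 2 \<le> (y - x) * ((ln y - ln x) * (y + x)) / 2" by simp
    moreover have "(y-x) * (2 * (y - x)) / 2 = (y-x)^2" by (simp add: power2_eq_square)
    moreover have "(y-x)^2 = (x-y)^2" by (rule power2_commute)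
    moreover have "(y - x) * ((ln y - ln x) * (y + x)) / 2 = ((ln x - ln y) * (x - y)) * ((x + y) / 2)" by (simp add: field_simps)
    ultimately show ?thesis by simp
  qed
qed

lemma jeffreys:
  fixes x y :: "'a \<Rightarrow> real"
  assumes fin: "finite S" and pos: "\<And>k. k \<in> S \<Longrightarrow> x k > 0 \<and> y k > 0"
    and sx: "(\<Sum>k\<in>S. x k) = 1" and sy: "(\<Sum>k\<in>S. y k) = 1"
  shows "(\<Sum>k\<in>S. \<bar>x k - y k\<bar>)^2 \<le> (\<Sum>k\<in>S. (ln (x k) - ln (y k)) * (x k - y k))"
proof -
  define w where "w k = (ln (x k) - ln (y k)) * (x k - y k)" for k
  define m where "m k = (x k + y k) / 2" for k
  have w0: "w k \<ge> 0" if "k \<in> S" for k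
  proof -
    have "(x k - y k)^2 \<le> w k * m k" using pointwise_sq pos[OF that] unfolding w_def m_def by blast
    moreover have "m k > 0" using pos[OF that] unfolding m_def by simp
    ultimately show ?thesis by (metis zero_le_power2 order_trans zero_le_mult_iff not_le)
  qed
  have m0: "m k \<ge> 0" if "k \<in> S" for k using pos[OF that] unfolding m_def by simp
  have d: "\<bar>x k - y k\<bar> \<le> \<bar>sqrt (w k)\<bar> * \<bar>sqrt (m k)\<bar>" if "k \<in> S" for k
  proof -
    have "(x k - y k)^2 \<le> w k * m k" using pointwise_sq pos[OF that] unfolding w_def m_def by blast
    then have "sqrt ((x k - y k)^2) \<le> sqrt (w k * m k)" by (rule real_sqrt_le_mono)
    then show ?thesis using w0[OF that] m0[OF that] by (simp add: real_sqrt_mult)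
  qed
  have "(\<Sum>k\<in>S. \<bar>x k - y k\<bar>) \<le> (\<Sum>k\<in>S. \<bar>sqrt (w k)\<bar> * \<bar>sqrt (m k)\<bar>)"
    using d by (rule sum_mono)
  also have "\<dots> \<le> L2_set (\<lambda>k. sqrt (w k)) S * L2_set (\<lambda>k. sqrt (m k)) S"
    by (rule L2_set_mult_ineq)
  also have "L2_set (\<lambda>k. sqrt (w k)) S = sqrt (\<Sum>k\<in>S. w k)"
    unfolding L2_set_def using w0 by (intro arg_cong[where f=sqrt] sum.cong) auto
  also have "L2_set (\<lambda>k. sqrt (m k)) S = sqrt (\<Sum>k\<in>S. m k)"
    unfolding L2_set_def using m0 by (intro arg_cong[where f=sqrt] sum.cong) auto
  also have "(\<Sum>k\<in>S. m k) = 1" unfolding m_def using sx sy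
    by (simp add: sum_divide_distrib[symmetric] sum.distrib)
  finally have le: "(\<Sum>k\<in>S. \<bar>x k - y k\<bar>) \<le> sqrt (\<Sum>k\<in>S. w k)" by simp
  have "(\<Sum>k\<in>S. \<bar>x k - y k\<bar>)^2 \<le> (sqrt (\<Sum>k\<in>S. w k))^2"
    using le by (intro power_mono) (auto intro: sum_nonneg)
  also have "\<dots> = (\<Sum>k\<in>S. w k)" using w0 by (simp add: sum_nonneg)
  finally show ?thesis unfolding w_def .
qed

lemma inner_eq: "inner (X::real^'m^'n) Y = (\<Sum>i\<in>UNIV. \<Sum>j\<in>UNIV. X$i$j * Y$i$j)"
  by (simp add: inner_vec_def)

lemma norm1_nonneg: "norm1 A \<ge> 0"
  unfolding norm1_def by (intro sum_nonneg) auto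

lemma norm1_commute: "norm1 (A - B) = norm1 (B - A)"
  unfolding norm1_def by (intro sum.cong refl) (simp add: abs_minus_commute)

lemma norm1_triangle: "norm1 (A - C) \<le> norm1 (A - B) + norm1 (B - C)"
  unfolding norm1_def sum.distrib[symmetric]
  by (intro sum_mono) (simp add: abs_triangle_ineq[of "A$i$j - B$i$j" "B$i$j - C$i$j" for i j, simplified])

lemma norm1_eq0: "norm1 (A - B) = 0 \<Longrightarrow> A = B"
proof -
  assume h: "norm1 (A - B) = 0"
  have "\<forall>i\<in>UNIV. (\<Sum>j\<in>UNIV. \<bar>(A - B)$i$j\<bar>) = 0"
    using h unfolding norm1_def by (subst sum_nonneg_eq_0_iff[symmetric]) (auto intro: sum_nonneg)
  then have "\<forall>i j. \<bar>(A - B)$i$j\<bar> = 0" by (simp add: sum_nonneg_eq_0_iff)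
  then show "A = B" by (simp add: vec_eq_iff)
qed

lemma norm_le_norm1: "norm (A::real^'m^'n) \<le> norm1 A"
proof -
  have "norm A \<le> (\<Sum>i\<in>UNIV. norm (A$i))" unfolding norm_vec_def by (rule L2_set_le_sum) auto
  also have "\<dots> \<le> (\<Sum>i\<in>UNIV. \<Sum>j\<in>UNIV. \<bar>A$i$j\<bar>)" by (intro sum_mono norm_le_l1_cart)
  finally show ?thesis unfolding norm1_def .
qed

lemma norm1_le_norm: "norm1 (A::real^'m^'n) \<le> real (CARD('n) * CARD('m)) * norm A"
proof -
  have "norm1 A \<le> (\<Sum>i\<in>(UNIV::'n set). \<Sum>j\<in>(UNIV::'m set). norm A)"
    unfolding norm1_def
  proof (intro sum_mono)
    fix i j
    have "\<bar>A$i$j\<bar> \<le> norm (A$i)" by (rule component_le_norm_cart)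
    also have "\<dots> \<le> norm A" by (rule Finite_Cartesian_Product.norm_nth_le)
    finally show "\<bar>A$i$j\<bar> \<le> norm A" .
  qed
  then show ?thesis by (simp add: mult.assoc)
qed

lemma norminf_ge: "\<bar>H$i$k\<bar> \<le> norminf H"
proof -
  have "{\<bar>H$i$j\<bar> | i j. True} = (\<lambda>(i,j). \<bar>H$i$j\<bar>) ` UNIV" by auto
  then have "finite {\<bar>H$i$j\<bar> | i j. True}" by simp
  then show ?thesis unfolding norminf_def by (rule Max_ge) auto
qed

lemma norminf_nonneg: "norminf H \<ge> 0"
  using norminf_ge[of H] abs_ge_zero order_trans by blast

lemma entry_bound: "\<bar>(H ** D)$i$j\<bar> \<le> norminf H * norm1 (D::real^'m^'n)"
proof -
  have "\<bar>(H ** D)$i$j\<bar> = \<bar>\<Sum>k\<in>UNIV. H$i$k * D$k$j\<bar>" by (simp add: matrix_matrix_mult_def)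
  also have "\<dots> \<le> (\<Sum>k\<in>UNIV. \<bar>H$i$k\<bar> * \<bar>D$k$j\<bar>)" by (rule order_trans[OF sum_abs]) (simp add: abs_mult)
  also have "\<dots> \<le> (\<Sum>k\<in>UNIV. norminf H * \<bar>D$k$j\<bar>)" by (intro sum_mono mult_right_mono norminf_ge) auto
  also have "\<dots> = norminf H * (\<Sum>k\<in>UNIV. \<bar>D$k$j\<bar>)" by (simp add: sum_distrib_left)
  also have "\<dots> \<le> norminf H * norm1 D"
  proof (intro mult_left_mono norminf_nonneg)
    have "(\<Sum>k\<in>UNIV. \<bar>D$k$j\<bar>) \<le> (\<Sum>k\<in>UNIV. \<Sum>j'\<in>UNIV. \<bar>D$k$j'\<bar>)"
      by (intro sum_mono member_le_sum) auto
    then show "(\<Sum>k\<in>UNIV. \<bar>D$k$j\<bar>) \<le> norm1 D" unfolding norm1_def .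
  qed
  finally show ?thesis .
qed

lemma sym_inner: 
  assumes "transpose H = H"
  shows "inner A (H ** X) = inner (H ** A) (X::real^'m^'n)"
proof -
  have Hs: "H$k$i = H$i$k" for i k
  proof -
    have "(transpose H)$i$k = H$k$i" by (simp add: transpose_def)
    then show ?thesis using assms by simp
  qed
  have "inner A (H ** X) = (\<Sum>i\<in>UNIV. \<Sum>j\<in>UNIV. A$i$j * (\<Sum>k\<in>UNIV. H$i$k * X$k$j))"
    by (simp add: inner_eq matrix_matrix_mult_def)
  also have "\<dots> = (\<Sum>i\<in>UNIV. \<Sum>j\<in>UNIV. \<Sum>k\<in>UNIV. A$i$j * H$i$k * X$k$j)"
    by (simp add: sum_distrib_left mult.assoc)
  also have "\<dots> = (\<Sum>j\<in>UNIV. \<Sum>i\<in>UNIV. \<Sum>k\<in>UNIV. A$i$j * H$i$k * X$k$j)"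
    by (rule sum.swap)
  also have "\<dots> = (\<Sum>j\<in>UNIV. \<Sum>k\<in>UNIV. \<Sum>i\<in>UNIV. A$i$j * H$i$k * X$k$j)"
    by (intro sum.cong refl sum.swap)
  also have "\<dots> = (\<Sum>k\<in>UNIV. \<Sum>j\<in>UNIV. \<Sum>i\<in>UNIV. A$i$j * H$i$k * X$k$j)"
    by (rule sum.swap)
  also have "\<dots> = (\<Sum>k\<in>UNIV. \<Sum>j\<in>UNIV. (\<Sum>i\<in>UNIV. H$k$i * A$i$j) * X$k$j)"
    by (simp add: sum_distrib_left sum_distrib_right Hs mult_ac)
  also have "\<dots> = inner (H ** A) X"
    by (simp add: inner_eq matrix_matrix_mult_def)
  finally show ?thesis .
qed

lemma linear_mm: "bounded_linear (\<lambda>X::real^'m^'n. (H::real^'n^'n) ** X)"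
proof -
  have "linear (\<lambda>X::real^'m^'n. H ** X)"
    by (rule linearI) (simp_all add: matrix_add_ldistrib vec_eq_iff matrix_matrix_mult_def sum_distrib_left algebra_simps sum.distrib)
  then show ?thesis by (simp add: linear_conv_bounded_linear)
qed

lemma grad_quad:
  assumes "transpose H = H"
  shows "grad (quad_obj H C) A = H ** A + C"
proof -
  have d: "(quad_obj H C has_derivative (\<lambda>x. inner (H ** A + C) x)) (at A)"
  proof -
    have "(quad_obj H C has_derivative (\<lambda>x. (inner A (H ** x) + inner x (H ** A)) / 2 + inner C x)) (at A)"
    proof -
      have hd: "((\<lambda>X. H ** X) has_derivative (\<lambda>X. H ** X)) (at A)"
        by (rule bounded_linear.has_derivative[OF linear_mm has_derivative_ident])
      have hC: "((\<lambda>x. inner C x) has_derivative (\<lambda>x. inner C x)) (at A)"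
        by (rule bounded_linear.has_derivative[OF bounded_linear_inner_right has_derivative_ident])
      show ?thesis unfolding quad_obj_def[abs_def]
        apply (rule hd hC refl derivative_eq_intros)+
        apply (auto simp: fun_eq_iff intro: hC hd)
        done
    qed
    moreover have "(\<lambda>x. (inner A (H ** x) + inner x (H ** A)) / 2 + inner C x) = (\<lambda>x. inner (H ** A + C) x)"
    proof
      fix x
      have "inner A (H ** x) = inner x (H ** A)" using sym_inner[OF assms, of A x] by (simp add: inner_commute)
      then show "(inner A (H ** x) + inner x (H ** A)) / 2 + inner C x = inner (H ** A + C) x"
        by (simp add: inner_add_left inner_add_right inner_commute[of C x] inner_commute[of x "H ** A"])
    qed
    ultimately show ?thesis by simp
  qed
  show ?thesis unfolding grad_def
  proof (rule the_equality)
    fix G assume "(quad_obj H C has_derivative (\<lambda>x. inner G x)) (at A)"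
    then have "(\<lambda>x. inner G x) = (\<lambda>x. inner (H ** A + C) x)" using d has_derivative_unique by blast
    then have "inner G (G - (H ** A + C)) = inner (H ** A + C) (G - (H ** A + C))" by metis
    then have "inner (G - (H ** A + C)) (G - (H ** A + C)) = 0" by (simp add: inner_diff_left)
    then show "G = H ** A + C" by simp
  qed (rule d)
qed
lemma ent_cont: "continuous_on {0..1} ent"
proof (rule continuous_on_IccI)
  have "((\<lambda>x::real. x * ln (x / exp 1)) \<longlongrightarrow> 0) (at_right 0)" by real_asymp
  then show "(ent \<longlongrightarrow> ent 0) (at_right 0)" by (simp add: ent_def[abs_def])
  show "(ent \<longlongrightarrow> ent 1) (at_left 1)" unfolding ent_def[abs_def]
    by (intro tendsto_intros) auto
  show "(ent \<longlongrightarrow> ent x) (at x)" if "0 < x" "x < 1" for x using that unfolding ent_def[abs_def]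
    by (intro tendsto_intros) auto
qed simp

context
  fixes a :: "real^'n" and b :: "real^'m"
  assumes a: "a \<in> pos_simplex" and b: "b \<in> pos_simplex"
begin

lemma K_sum: "\<pi> \<in> transport_polytope a b \<Longrightarrow> (\<Sum>i\<in>UNIV. \<Sum>j\<in>UNIV. \<pi>$i$j) = 1"
  using a unfolding transport_polytope_def pos_simplex_def by auto

lemma K_le1: 
  assumes "\<pi> \<in> transport_polytope a b" shows "\<pi>$i$j \<le> 1"
proof -
  have "\<pi>$i$j \<le> (\<Sum>j\<in>UNIV. \<pi>$i$j)" using assms unfolding transport_polytope_def
    by (intro member_le_sum) auto
  also have "\<dots> = a$i" using assms unfolding transport_polytope_def by auto
  also have "\<dots> \<le> (\<Sum>i\<in>UNIV. a$i)" using a unfolding pos_simplex_def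
    by (intro member_le_sum) (auto intro: less_imp_le)
  finally show ?thesis using a unfolding pos_simplex_def by simp
qed

definition P0 :: "real^'m^'n" where "P0 = (\<chi> i j. a$i * b$j)"

lemma P0_K: "P0 \<in> transport_polytope a b" and P0_pos: "P0$i$j > 0"
proof -
  have "(\<Sum>j\<in>UNIV. a$i * b$j) = a$i" for i using b unfolding pos_simplex_def by (simp add: sum_distrib_left[symmetric])
  moreover have "(\<Sum>i\<in>UNIV. a$i * b$j) = b$j" for j using a unfolding pos_simplex_def by (simp add: sum_distrib_right[symmetric])
  moreover have "a$i * b$j > 0" for i j using a b unfolding pos_simplex_def by simp
  ultimately show "P0 \<in> transport_polytope a b" "P0$i$j > 0" unfolding P0_def transport_polytope_def
    by (auto intro: less_imp_le)
qed

lemma K_comb: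
  assumes "\<pi> \<in> transport_polytope a b" "\<sigma> \<in> transport_polytope a b" "0 \<le> t" "t \<le> 1"
  shows "\<pi> + t *\<^sub>R (\<sigma> - \<pi>) \<in> transport_polytope a b"
proof -
  have e: "(\<pi> + t *\<^sub>R (\<sigma> - \<pi>))$i$j = (1 - t) * \<pi>$i$j + t * \<sigma>$i$j" for i j
    by (simp add: algebra_simps)
  have r: "(\<Sum>j\<in>UNIV. (1 - t) * \<pi>$i$j + t * \<sigma>$i$j) = (1 - t) * (\<Sum>j\<in>UNIV. \<pi>$i$j) + t * (\<Sum>j\<in>UNIV. \<sigma>$i$j)" for i
    by (simp add: sum.distrib sum_distrib_left)
  have c: "(\<Sum>i\<in>UNIV. (1 - t) * \<pi>$i$j + t * \<sigma>$i$j) = (1 - t) * (\<Sum>i\<in>UNIV. \<pi>$i$j) + t * (\<Sum>i\<in>UNIV. \<sigma>$i$j)" for j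
    by (simp add: sum.distrib sum_distrib_left)
  show ?thesis using assms unfolding transport_polytope_def mem_Collect_eq e r c
    by (auto intro!: add_nonneg_nonneg mult_nonneg_nonneg) (simp_all add: algebra_simps)
qed

lemma K_convex: "convex (transport_polytope a b)"
  unfolding convex_alt
proof (intro ballI allI impI)
  fix x y and u :: real assume h: "x \<in> transport_polytope a b" "y \<in> transport_polytope a b" "0 \<le> u \<and> u \<le> 1"
  have "(1 - u) *\<^sub>R x + u *\<^sub>R y = x + u *\<^sub>R (y - x)" by (simp add: algebra_simps)
  then show "(1 - u) *\<^sub>R x + u *\<^sub>R y \<in> transport_polytope a b" using K_comb[OF h(1,2)] h(3) by simp
qed

lemma K_compact: "compact (transport_polytope a b)"
proof -
  have cl: "closed (transport_polytope a b)" unfolding transport_polytope_def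
    by (intro closed_Collect_conj closed_Collect_all closed_Collect_le closed_Collect_eq continuous_intros)
  have "norm \<pi> \<le> 1" if "\<pi> \<in> transport_polytope a b" for \<pi>
  proof -
    have "norm1 \<pi> = (\<Sum>i\<in>UNIV. \<Sum>j\<in>UNIV. \<pi>$i$j)" using that unfolding norm1_def transport_polytope_def by auto
    then show ?thesis using norm_le_norm1[of \<pi>] K_sum[OF that] by simp
  qed
  then have "bounded (transport_polytope a b)" unfolding bounded_iff by blast
  then show ?thesis using cl by (simp add: compact_eq_bounded_closed)
qed

lemma F_cont: "continuous_on (transport_polytope a b) (\<lambda>\<pi>. inner c \<pi> + lam * entropy \<pi>)"
proof -
  have "continuous_on (transport_polytope a b) (\<lambda>\<pi>. ent (\<pi>$i$j))" for i j
  proof (rule continuous_on_compose2[OF ent_cont])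
    show "continuous_on (transport_polytope a b) (\<lambda>\<pi>::real^'m^'n. \<pi>$i$j)" by (intro continuous_intros)
    show "(\<lambda>\<pi>::real^'m^'n. \<pi>$i$j) ` transport_polytope a b \<subseteq> {0..1}"
      using K_le1 unfolding transport_polytope_def by auto
  qed
  then show ?thesis unfolding entropy_eq by (intro continuous_intros) auto
qed

definition ismin :: "real^'m^'n \<Rightarrow> real \<Rightarrow> real^'m^'n \<Rightarrow> bool" where
  "ismin c lam \<pi> \<longleftrightarrow> \<pi> \<in> transport_polytope a b \<and>
     (\<forall>\<sigma>\<in>transport_polytope a b. inner c \<pi> + lam * entropy \<pi> \<le> inner c \<sigma> + lam * entropy \<sigma>)"

lemma min_exists: "\<exists>\<pi>. ismin c lam \<pi>"
  using continuous_attains_inf[OF K_compact _ F_cont, of c lam] P0_K unfolding ismin_def by blast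

lemma key_ineq:
  assumes mn: "ismin c lam \<pi>" and lam: "lam \<ge> 0" and \<sigma>: "\<sigma> \<in> transport_polytope a b"
    and t: "0 < t" "t < 1"
    and zpos: "\<And>i j. \<pi>$i$j + t * (\<sigma>$i$j - \<pi>$i$j) > 0"
  shows "0 \<le> (\<Sum>i\<in>UNIV. \<Sum>j\<in>UNIV. (c$i$j + lam * ln (\<pi>$i$j + t * (\<sigma>$i$j - \<pi>$i$j))) * (\<sigma>$i$j - \<pi>$i$j))"
proof -
  define z where "z = \<pi> + t *\<^sub>R (\<sigma> - \<pi>)"
  have \<pi>K: "\<pi> \<in> transport_polytope a b" using mn unfolding ismin_def by auto
  have zK: "z \<in> transport_polytope a b" unfolding z_def using K_comb[OF \<pi>K \<sigma>] t by simp
  have ze: "z$i$j = \<pi>$i$j + t * (\<sigma>$i$j - \<pi>$i$j)" for i j unfolding z_def by simp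
  have le: "inner c \<pi> + lam * entropy \<pi> \<le> inner c z + lam * entropy z"
    using mn zK unfolding ismin_def by auto
  have lin: "inner c z - inner c \<pi> = t * (\<Sum>i\<in>UNIV. \<Sum>j\<in>UNIV. c$i$j * (\<sigma>$i$j - \<pi>$i$j))"
    unfolding inner_eq ze by (simp add: sum_subtractf[symmetric] sum_distrib_left algebra_simps)
  have \<pi>0: "\<pi>$i$j \<ge> 0" for i j using \<pi>K unfolding transport_polytope_def by auto
  have ent: "entropy z - entropy \<pi> \<le> t * (\<Sum>i\<in>UNIV. \<Sum>j\<in>UNIV. ln (z$i$j) * (\<sigma>$i$j - \<pi>$i$j))"
  proof -
    have "entropy z - entropy \<pi> = (\<Sum>i\<in>UNIV. \<Sum>j\<in>UNIV. ent (z$i$j) - ent (\<pi>$i$j))"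
      unfolding entropy_eq by (simp add: sum_subtractf)
    also have "\<dots> \<le> (\<Sum>i\<in>UNIV. \<Sum>j\<in>UNIV. t * (ln (z$i$j) * (\<sigma>$i$j - \<pi>$i$j)))"
    proof (intro sum_mono)
      fix i j
      have "ent (z$i$j) + ln (z$i$j) * (\<pi>$i$j - z$i$j) \<le> ent (\<pi>$i$j)"
        using grad_ineq[OF \<pi>0 zpos[of i j, folded ze]] .
      then show "ent (z$i$j) - ent (\<pi>$i$j) \<le> t * (ln (z$i$j) * (\<sigma>$i$j - \<pi>$i$j))"
        unfolding ze by (simp add: algebra_simps)
    qed
    also have "\<dots> = t * (\<Sum>i\<in>UNIV. \<Sum>j\<in>UNIV. ln (z$i$j) * (\<sigma>$i$j - \<pi>$i$j))"
      by (simp add: sum_distrib_left)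
    finally show ?thesis .
  qed
  have "0 \<le> (inner c z - inner c \<pi>) + lam * (entropy z - entropy \<pi>)" using le by (simp add: algebra_simps)
  also have "\<dots> \<le> t * (\<Sum>i\<in>UNIV. \<Sum>j\<in>UNIV. c$i$j * (\<sigma>$i$j - \<pi>$i$j)) + lam * (t * (\<Sum>i\<in>UNIV. \<Sum>j\<in>UNIV. ln (z$i$j) * (\<sigma>$i$j - \<pi>$i$j)))"
    unfolding lin using ent lam by (intro add_left_mono mult_left_mono) auto
  also have "\<dots> = t * (\<Sum>i\<in>UNIV. \<Sum>j\<in>UNIV. (c$i$j + lam * ln (z$i$j)) * (\<sigma>$i$j - \<pi>$i$j))"
    unfolding distrib_right sum.distrib distrib_left by (simp add: sum_distrib_left mult_ac)
  finally have "0 \<le> t * (\<Sum>i\<in>UNIV. \<Sum>j\<in>UNIV. (c$i$j + lam * ln (z$i$j)) * (\<sigma>$i$j - \<pi>$i$j))" .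
  then show ?thesis using t unfolding ze by (simp add: zero_le_mult_iff)
qed

lemma variational:
  assumes mn: "ismin c lam \<pi>" and lam: "lam \<ge> 0" and \<sigma>: "\<sigma> \<in> transport_polytope a b"
    and pos: "\<And>i j. \<pi>$i$j > 0"
  shows "0 \<le> (\<Sum>i\<in>UNIV. \<Sum>j\<in>UNIV. (c$i$j + lam * ln (\<pi>$i$j)) * (\<sigma>$i$j - \<pi>$i$j))"
proof (rule tendsto_lowerbound)
  have \<sigma>0: "\<sigma>$i$j \<ge> 0" for i j using \<sigma> unfolding transport_polytope_def by auto
  show "((\<lambda>t. \<Sum>i\<in>UNIV. \<Sum>j\<in>UNIV. (c$i$j + lam * ln (\<pi>$i$j + t * (\<sigma>$i$j - \<pi>$i$j))) * (\<sigma>$i$j - \<pi>$i$j))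
        \<longlongrightarrow> (\<Sum>i\<in>UNIV. \<Sum>j\<in>UNIV. (c$i$j + lam * ln (\<pi>$i$j)) * (\<sigma>$i$j - \<pi>$i$j))) (at_right 0)"
    using pos by (auto intro!: tendsto_eq_intros simp: less_imp_neq[symmetric])
  show "\<forall>\<^sub>F t in at_right 0. 0 \<le> (\<Sum>i\<in>UNIV. \<Sum>j\<in>UNIV. (c$i$j + lam * ln (\<pi>$i$j + t * (\<sigma>$i$j - \<pi>$i$j))) * (\<sigma>$i$j - \<pi>$i$j))"
    unfolding eventually_at_right[OF zero_less_one]
  proof (intro exI[of _ 1] conjI allI impI)
    fix t :: real assume t: "0 < t" "t < 1"
    show "0 \<le> (\<Sum>i\<in>UNIV. \<Sum>j\<in>UNIV. (c$i$j + lam * ln (\<pi>$i$j + t * (\<sigma>$i$j - \<pi>$i$j))) * (\<sigma>$i$j - \<pi>$i$j))"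
    proof (rule key_ineq[OF mn lam \<sigma> t])
      fix i j
      have "\<pi>$i$j + t * (\<sigma>$i$j - \<pi>$i$j) = (1 - t) * \<pi>$i$j + t * \<sigma>$i$j" by (simp add: algebra_simps)
      also have "\<dots> > 0" using t pos[of i j] \<sigma>0[of i j] by (intro add_pos_nonneg mult_pos_pos mult_nonneg_nonneg) auto
      finally show "\<pi>$i$j + t * (\<sigma>$i$j - \<pi>$i$j) > 0" .
    qed
  qed simp
qed simp
lemma dsum: "(\<Sum>i\<in>(UNIV::'n set). \<Sum>j\<in>(UNIV::'m set). f i j) = (\<Sum>k\<in>UNIV. f (fst k) (snd k))"
  unfolding UNIV_Times_UNIV[symmetric] sum.cartesian_product by (simp add: case_prod_beta)

lemma positivity:
  assumes mn: "ismin c lam \<pi>" and lam: "lam > 0"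
  shows "\<pi>$i0$j0 > 0"
proof (rule ccontr)
  assume nz: "\<not> \<pi>$i0$j0 > 0"
  have \<pi>K: "\<pi> \<in> transport_polytope a b" using mn unfolding ismin_def by auto
  have \<pi>0: "\<pi>$i$j \<ge> 0" for i j using \<pi>K unfolding transport_polytope_def by auto
  have z0: "\<pi>$i0$j0 = 0" using \<pi>0[of i0 j0] nz by linarith
  define P where "P = P0"
  have PK: "P \<in> transport_polytope a b" and Ppos: "\<And>i j. P$i$j > 0" unfolding P_def using P0_K P0_pos by auto
  define B where "B i j = c$i$j * (P$i$j - \<pi>$i$j) + (if \<pi>$i$j = 0 then lam * P$i$j * ln (P$i$j)
      else lam * (\<bar>ln (min (\<pi>$i$j) (P$i$j))\<bar> + \<bar>ln (max (\<pi>$i$j) (P$i$j))\<bar>) * \<bar>P$i$j - \<pi>$i$j\<bar>)" for i j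
  define s where "s i j = (if \<pi>$i$j = 0 then lam * P$i$j else 0)" for i j
  define Bs where "Bs = (\<Sum>i\<in>UNIV. \<Sum>j\<in>UNIV. B i j)"
  define S where "S = (\<Sum>i\<in>UNIV. \<Sum>j\<in>UNIV. s i j)"
  have s0: "s i j \<ge> 0" for i j unfolding s_def using lam Ppos[of i j] by auto
  have "s i0 j0 \<le> (\<Sum>j\<in>UNIV. s i0 j)" by (intro member_le_sum s0) auto
  also have "\<dots> \<le> S" unfolding S_def by (intro member_le_sum sum_nonneg s0) auto
  finally have "lam * P$i0$j0 \<le> S" using z0 unfolding s_def by simp
  moreover have "lam * P$i0$j0 > 0" using lam Ppos[of i0 j0] by simp
  ultimately have Spos: "S > 0" by linarith
  have bound: "0 \<le> Bs + S * ln t" if t: "0 < t" "t < 1" for t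
  proof -
    have zpos: "\<pi>$i$j + t * (P$i$j - \<pi>$i$j) > 0" for i j
    proof -
      have "\<pi>$i$j + t * (P$i$j - \<pi>$i$j) = (1 - t) * \<pi>$i$j + t * P$i$j" by (simp add: algebra_simps)
      also have "\<dots> > 0" using t Ppos[of i j] \<pi>0[of i j] by (intro add_nonneg_pos mult_pos_pos mult_nonneg_nonneg) auto
      finally show ?thesis .
    qed
    have "0 \<le> (\<Sum>i\<in>UNIV. \<Sum>j\<in>UNIV. (c$i$j + lam * ln (\<pi>$i$j + t * (P$i$j - \<pi>$i$j))) * (P$i$j - \<pi>$i$j))"
      by (rule key_ineq[OF mn _ PK t zpos]) (use lam in auto)
    also have "\<dots> \<le> (\<Sum>i\<in>UNIV. \<Sum>j\<in>UNIV. B i j + s i j * ln t)"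
    proof (intro sum_mono)
      fix i j
      let ?z = "\<pi>$i$j + t * (P$i$j - \<pi>$i$j)"
      show "(c$i$j + lam * ln ?z) * (P$i$j - \<pi>$i$j) \<le> B i j + s i j * ln t"
      proof (cases "\<pi>$i$j = 0")
        case True
        have "ln ?z = ln t + ln (P$i$j)" using True t Ppos[of i j] by (simp add: ln_mult)
        then show ?thesis using True unfolding B_def s_def by (simp add: algebra_simps)
      next
        case False
        then have p: "\<pi>$i$j > 0" using \<pi>0[of i j] by simp
        let ?mn = "min (\<pi>$i$j) (P$i$j)" and ?mx = "max (\<pi>$i$j) (P$i$j)"
        have zc: "?z = (1 - t) * \<pi>$i$j + t * P$i$j" by (simp add: algebra_simps)
        have mnpos: "?mn > 0" using p Ppos[of i j] by simp
        have "?mn \<le> ?z"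
        proof -
          have "(1 - t) * ?mn + t * ?mn \<le> (1 - t) * \<pi>$i$j + t * P$i$j"
            using t by (intro add_mono mult_left_mono) auto
          then show ?thesis unfolding zc by (simp add: algebra_simps)
        qed
        moreover have "?z \<le> ?mx"
        proof -
          have "(1 - t) * \<pi>$i$j + t * P$i$j \<le> (1 - t) * ?mx + t * ?mx"
            using t by (intro add_mono mult_left_mono) auto
          then show ?thesis unfolding zc by (simp add: algebra_simps)
        qed
        ultimately have "ln ?mn \<le> ln ?z" "ln ?z \<le> ln ?mx" using mnpos by auto
        then have lz: "\<bar>ln ?z\<bar> \<le> \<bar>ln ?mn\<bar> + \<bar>ln ?mx\<bar>" by linarith
        have "lam * ln ?z * (P$i$j - \<pi>$i$j) \<le> \<bar>lam * ln ?z * (P$i$j - \<pi>$i$j)\<bar>" by (rule abs_ge_self)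
        also have "\<dots> = lam * \<bar>ln ?z\<bar> * \<bar>P$i$j - \<pi>$i$j\<bar>" using lam by (simp add: abs_mult)
        also have "\<dots> \<le> lam * (\<bar>ln ?mn\<bar> + \<bar>ln ?mx\<bar>) * \<bar>P$i$j - \<pi>$i$j\<bar>"
          using lam lz by (intro mult_right_mono mult_left_mono) auto
        finally show ?thesis using False unfolding B_def s_def by (simp add: algebra_simps)
      qed
    qed
    also have "\<dots> = Bs + S * ln t" unfolding Bs_def S_def by (simp add: sum.distrib sum_distrib_right)
    finally show ?thesis .
  qed
  define t where "t = exp (- (\<bar>Bs\<bar> + 1) / S)"
  have t: "0 < t" "t < 1" unfolding t_def using Spos by (auto simp: field_simps)
  have "S * ln t = - (\<bar>Bs\<bar> + 1)" unfolding t_def using Spos by simp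
  then show False using bound[OF t] by linarith
qed

lemma jeffreys_mat:
  assumes "\<pi>1 \<in> transport_polytope a b" "\<pi>2 \<in> transport_polytope a b"
    and "\<And>i j. \<pi>1$i$j > 0" "\<And>i j. \<pi>2$i$j > 0"
  shows "norm1 (\<pi>1 - \<pi>2)^2 \<le> (\<Sum>i\<in>UNIV. \<Sum>j\<in>UNIV. (ln (\<pi>1$i$j) - ln (\<pi>2$i$j)) * (\<pi>1$i$j - \<pi>2$i$j))"
proof -
  have "(\<Sum>k\<in>UNIV. \<bar>\<pi>1$fst k$snd k - \<pi>2$fst k$snd k\<bar>)^2
     \<le> (\<Sum>k\<in>UNIV. (ln (\<pi>1$fst k$snd k) - ln (\<pi>2$fst k$snd k)) * (\<pi>1$fst k$snd k - \<pi>2$fst k$snd k))"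
    using assms K_sum[OF assms(1)] K_sum[OF assms(2)]
    by (intro jeffreys) (auto simp: dsum)
  then show ?thesis unfolding norm1_def by (simp add: dsum)
qed

lemma core:
  assumes mn1: "ismin c1 lam \<pi>1" and mn2: "ismin c2 lam \<pi>2" and lam: "lam > 0"
    and M: "\<And>i j. \<bar>c1$i$j - c2$i$j\<bar> \<le> M"
  shows "lam * norm1 (\<pi>1 - \<pi>2) \<le> M"
proof -
  have K1: "\<pi>1 \<in> transport_polytope a b" using mn1 unfolding ismin_def by auto
  have K2: "\<pi>2 \<in> transport_polytope a b" using mn2 unfolding ismin_def by auto
  have p1: "\<And>i j. \<pi>1$i$j > 0" using positivity[OF mn1 lam] .
  have p2: "\<And>i j. \<pi>2$i$j > 0" using positivity[OF mn2 lam] .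
  have V1: "0 \<le> (\<Sum>i\<in>UNIV. \<Sum>j\<in>UNIV. (c1$i$j + lam * ln (\<pi>1$i$j)) * (\<pi>2$i$j - \<pi>1$i$j))"
    using variational[OF mn1 _ K2 p1] lam by simp
  have V2: "0 \<le> (\<Sum>i\<in>UNIV. \<Sum>j\<in>UNIV. (c2$i$j + lam * ln (\<pi>2$i$j)) * (\<pi>1$i$j - \<pi>2$i$j))"
    using variational[OF mn2 _ K1 p2] lam by simp
  define J where "J = (\<Sum>i\<in>UNIV. \<Sum>j\<in>UNIV. (ln (\<pi>1$i$j) - ln (\<pi>2$i$j)) * (\<pi>1$i$j - \<pi>2$i$j))"
  define L where "L = (\<Sum>i\<in>UNIV. \<Sum>j\<in>UNIV. (c1$i$j - c2$i$j) * (\<pi>2$i$j - \<pi>1$i$j))"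
  have "(\<Sum>i\<in>UNIV. \<Sum>j\<in>UNIV. (c1$i$j + lam * ln (\<pi>1$i$j)) * (\<pi>2$i$j - \<pi>1$i$j))
      + (\<Sum>i\<in>UNIV. \<Sum>j\<in>UNIV. (c2$i$j + lam * ln (\<pi>2$i$j)) * (\<pi>1$i$j - \<pi>2$i$j))
      = (\<Sum>i\<in>UNIV. \<Sum>j\<in>UNIV. (c1$i$j - c2$i$j) * (\<pi>2$i$j - \<pi>1$i$j) - lam * ((ln (\<pi>1$i$j) - ln (\<pi>2$i$j)) * (\<pi>1$i$j - \<pi>2$i$j)))"
    unfolding sum.distrib[symmetric] by (intro sum.cong refl) (simp add: algebra_simps)
  also have "\<dots> = L - lam * J" unfolding L_def J_def by (simp add: sum_subtractf sum_distrib_left)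
  finally have "lam * J \<le> L" using V1 V2 by linarith
  moreover have "L \<le> M * norm1 (\<pi>1 - \<pi>2)"
  proof -
    have "L \<le> (\<Sum>i\<in>UNIV. \<Sum>j\<in>UNIV. M * \<bar>(\<pi>1 - \<pi>2)$i$j\<bar>)" unfolding L_def
    proof (intro sum_mono)
      fix i j
      have "(c1$i$j - c2$i$j) * (\<pi>2$i$j - \<pi>1$i$j) \<le> \<bar>c1$i$j - c2$i$j\<bar> * \<bar>\<pi>2$i$j - \<pi>1$i$j\<bar>"
        by (metis abs_ge_self abs_mult)
      also have "\<dots> \<le> M * \<bar>(\<pi>1 - \<pi>2)$i$j\<bar>" using M[of i j] by (simp add: abs_minus_commute mult_right_mono)
      finally show "(c1$i$j - c2$i$j) * (\<pi>2$i$j - \<pi>1$i$j) \<le> M * \<bar>(\<pi>1 - \<pi>2)$i$j\<bar>" .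
    qed
    then show ?thesis unfolding norm1_def by (simp add: sum_distrib_left)
  qed
  moreover have "norm1 (\<pi>1 - \<pi>2)^2 \<le> J" unfolding J_def by (rule jeffreys_mat[OF K1 K2 p1 p2])
  ultimately have "lam * norm1 (\<pi>1 - \<pi>2)^2 \<le> M * norm1 (\<pi>1 - \<pi>2)"
    using lam by (meson mult_left_mono less_imp_le order_trans)
  moreover have M0: "M \<ge> 0" using M[of undefined undefined] by linarith
  ultimately show ?thesis
  proof (cases "norm1 (\<pi>1 - \<pi>2) = 0")
    case False
    then have "norm1 (\<pi>1 - \<pi>2) > 0" using norm1_nonneg[of "\<pi>1 - \<pi>2"] by simp
    moreover assume "lam * norm1 (\<pi>1 - \<pi>2)^2 \<le> M * norm1 (\<pi>1 - \<pi>2)"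
    ultimately show ?thesis by (simp add: power2_eq_square mult.assoc[symmetric])
  qed simp
qed

lemma ismin_unique: "lam > 0 \<Longrightarrow> ismin c lam \<pi>1 \<Longrightarrow> ismin c lam \<pi>2 \<Longrightarrow> \<pi>1 = \<pi>2"
  using core[of c lam \<pi>1 c \<pi>2 0] norm1_nonneg[of "\<pi>1 - \<pi>2"]
  by (intro norm1_eq0) (smt (verit) mult_pos_pos)

end
lemma T_char:
  assumes a: "a \<in> pos_simplex" and b: "b \<in> pos_simplex" and H: "transpose H = H" and lam: "lam > 0"
  shows "ismin a b (H ** A + C) lam (T_map (quad_obj H C) lam a b A)"
proof -
  have ex1: "\<exists>!\<pi>. ismin a b (H ** A + C) lam \<pi>"
    using min_exists[OF a b] ismin_unique[OF a b lam] by blast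
  show ?thesis unfolding T_map_def grad_quad[OF H]
    using theI'[OF ex1] unfolding ismin_def[OF a b] by simp
qed

theorem theorem1:
  fixes a :: "real^'n" and b :: "real^'m"
    and H :: "real^'n^'n" and C :: "real^'m^'n" and lam :: real
  assumes "a \<in> pos_simplex" and "b \<in> pos_simplex"
    and "transpose H = H"
    and "lam > norminf H"
  shows "(\<exists>q. 0 \<le> q \<and> q < 1 \<and>
            (\<forall>A B. norm1 (T_map (quad_obj H C) lam a b A - T_map (quad_obj H C) lam a b B)
                    \<le> q * norm1 (A - B)))
       \<and> (\<exists>\<pi>s. \<pi>s \<in> transport_polytope_pos a b
            \<and> T_map (quad_obj H C) lam a b \<pi>s = \<pi>s
            \<and> (\<forall>A. T_map (quad_obj H C) lam a b A = A \<longrightarrow> A = \<pi>s)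
            \<and> (\<forall>\<pi>0 \<in> transport_polytope a b. \<forall>k::nat.
                 norm1 ((T_map (quad_obj H C) lam a b ^^ k) \<pi>0 - \<pi>s)
                 \<le> (norminf H / lam) ^ k / (1 - norminf H / lam)
                    * norm1 (T_map (quad_obj H C) lam a b \<pi>0 - \<pi>0)))"
proof -
  note a = assms(1) and b = assms(2) and Hs = assms(3)
  define T where "T = T_map (quad_obj H C) lam a b"
  define q where "q = norminf H / lam"
  define K where "K = transport_polytope a b"
  have lam: "lam > 0" using assms(4) norminf_nonneg[of H] by linarith
  have q0: "0 \<le> q" unfolding q_def using lam norminf_nonneg[of H] by simp
  have q1: "q < 1" unfolding q_def using lam assms(4) by simp
  have Tm: "ismin a b (H ** A + C) lam (T A)" for A unfolding T_def by (rule T_char[OF a b Hs lam])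
  have TK: "T A \<in> K" for A using Tm[of A] unfolding ismin_def[OF a b] K_def by auto
  have Tpos: "T A $ i $ j > 0" for A i j by (rule positivity[OF a b Tm lam])
  have contr: "norm1 (T A - T B) \<le> q * norm1 (A - B)" for A B
  proof -
    have "\<bar>(H ** A + C)$i$j - (H ** B + C)$i$j\<bar> \<le> norminf H * norm1 (A - B)" for i j
    proof -
      have "(H ** A + C)$i$j - (H ** B + C)$i$j = (H ** (A - B))$i$j"
        by (simp add: matrix_matrix_mult_def sum_subtractf[symmetric] algebra_simps)
      then show ?thesis using entry_bound[of H "A - B" i j] by simp
    qed
    then have "lam * norm1 (T A - T B) \<le> norminf H * norm1 (A - B)"
      by (intro core[OF a b Tm Tm lam])
    then show ?thesis unfolding q_def using lam by (simp add: field_simps)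
  qed
  have N0: "real (CARD('n) * CARD('m)) \<ge> 0" by simp
  have lip: "(q * real (CARD('n) * CARD('m)))-lipschitz_on K T"
  proof (rule lipschitz_onI)
    fix x y
    have "dist (T x) (T y) \<le> norm1 (T x - T y)" by (simp add: dist_norm norm_le_norm1)
    also have "\<dots> \<le> q * norm1 (x - y)" by (rule contr)
    also have "\<dots> \<le> q * (real (CARD('n) * CARD('m)) * norm (x - y))"
      by (intro mult_left_mono q0 norm1_le_norm)
    finally show "dist (T x) (T y) \<le> q * real (CARD('n) * CARD('m)) * dist x y"
      by (simp add: dist_norm mult.assoc)
  qed (use q0 N0 in simp)
  obtain \<pi>s where \<pi>sK: "\<pi>s \<in> K" and fixp: "T \<pi>s = \<pi>s"
  proof (rule brouwer)
    show "compact K" "convex K" unfolding K_def using K_compact[OF a b] K_convex[OF a b] by auto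
    show "K \<noteq> {}" unfolding K_def using P0_K[OF a b] by auto
    show "continuous_on K T" by (rule lipschitz_on_continuous_on[OF lip])
    show "T \<in> K \<rightarrow> K" using TK by auto
  qed
  have uniq: "A = \<pi>s" if "T A = A" for A
  proof -
    have "norm1 (A - \<pi>s) \<le> q * norm1 (A - \<pi>s)" using contr[of A \<pi>s] that fixp by simp
    then have "(1 - q) * norm1 (A - \<pi>s) \<le> 0" by (simp add: algebra_simps)
    then have "norm1 (A - \<pi>s) \<le> 0" using q1 by (simp add: mult_le_0_iff)
    then show ?thesis using norm1_nonneg[of "A - \<pi>s"] by (intro norm1_eq0) simp
  qed
  have iter: "norm1 ((T ^^ k) \<pi>0 - \<pi>s) \<le> q ^ k * norm1 (\<pi>0 - \<pi>s)" for k \<pi>0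
  proof (induction k)
    case 0 then show ?case by simp
  next
    case (Suc k)
    have "norm1 ((T ^^ Suc k) \<pi>0 - \<pi>s) = norm1 (T ((T ^^ k) \<pi>0) - T \<pi>s)" using fixp by simp
    also have "\<dots> \<le> q * norm1 ((T ^^ k) \<pi>0 - \<pi>s)" by (rule contr)
    also have "\<dots> \<le> q * (q ^ k * norm1 (\<pi>0 - \<pi>s))" using Suc q0 by (intro mult_left_mono)
    finally show ?case by (simp add: mult.assoc)
  qed
  have start: "norm1 (\<pi>0 - \<pi>s) \<le> norm1 (T \<pi>0 - \<pi>0) / (1 - q)" for \<pi>0
  proof -
    have "norm1 (\<pi>0 - \<pi>s) \<le> norm1 (\<pi>0 - T \<pi>0) + norm1 (T \<pi>0 - \<pi>s)" by (rule norm1_triangle)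
    also have "norm1 (T \<pi>0 - \<pi>s) \<le> q * norm1 (\<pi>0 - \<pi>s)" using contr[of \<pi>0 \<pi>s] fixp by simp
    finally have "(1 - q) * norm1 (\<pi>0 - \<pi>s) \<le> norm1 (T \<pi>0 - \<pi>0)"
      using norm1_commute[of \<pi>0 "T \<pi>0"] by (simp add: algebra_simps)
    then show ?thesis using q1 by (simp add: field_simps)
  qed
  have bound: "norm1 ((T ^^ k) \<pi>0 - \<pi>s) \<le> q ^ k / (1 - q) * norm1 (T \<pi>0 - \<pi>0)" for k \<pi>0
  proof -
    have "norm1 ((T ^^ k) \<pi>0 - \<pi>s) \<le> q ^ k * norm1 (\<pi>0 - \<pi>s)" by (rule iter)
    also have "\<dots> \<le> q ^ k * (norm1 (T \<pi>0 - \<pi>0) / (1 - q))"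
      using start q0 by (intro mult_left_mono) auto
    finally show ?thesis by simp
  qed
  have \<pi>spos: "\<pi>s \<in> transport_polytope_pos a b"
    using \<pi>sK Tpos[of \<pi>s] fixp unfolding transport_polytope_pos_def K_def by auto
  have P1: "\<exists>q. 0 \<le> q \<and> q < 1 \<and> (\<forall>A B. norm1 (T A - T B) \<le> q * norm1 (A - B))"
    using q0 q1 contr by blast
  have P2: "\<exists>\<pi>s. \<pi>s \<in> transport_polytope_pos a b \<and> T \<pi>s = \<pi>s \<and> (\<forall>A. T A = A \<longrightarrow> A = \<pi>s)
     \<and> (\<forall>\<pi>0 \<in> transport_polytope a b. \<forall>k::nat. norm1 ((T ^^ k) \<pi>0 - \<pi>s) \<le> q ^ k / (1 - q) * norm1 (T \<pi>0 - \<pi>0))"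
  proof (intro exI[of _ \<pi>s] conjI allI ballI impI)
    show "\<pi>s \<in> transport_polytope_pos a b" by (rule \<pi>spos)
    show "T \<pi>s = \<pi>s" by (rule fixp)
    show "A = \<pi>s" if "T A = A" for A using uniq that .
    show "norm1 ((T ^^ k) \<pi>0 - \<pi>s) \<le> q ^ k / (1 - q) * norm1 (T \<pi>0 - \<pi>0)" for k \<pi>0 by (rule bound)
  qed
  show ?thesis using P1 P2 unfolding T_def q_def by blast
qed

end
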